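(* Let $X=\bigsqcup_{\lambda\in\Lambda}G_\lambda$ be an MCQ, $R$ a ring, $M$ a left $R$-module, and let $(f_1,f_2,f_3,f_4;\phi_1,\phi_2)$ be a 6-tuple of maps ($f_1,f_2:X\times X\to R$, $f_3,f_4:\bigsqcup_\lambda(G_\lambda\times G_\lambda)\to R$, $\phi_1:X\times X\to M$, $\phi_2:\bigsqcup_\lambda(G_\lambda\times G_\lambda)\to M$) satisfying conditions (0-i)–(4-$\phi$). Define $g_1,g_2:X\times X\to R$, $g_3,g_4:\bigsqcup_\lambda(G_\lambda\times G_\lambda)\to R$, $\psi_1:X\times X\to M$, $\psi_2:\bigsqcup_\lambda(G_\lambda\times G_\lambda)\to M$ by $g_1(x,y)=f_1(e_x,y)$, $g_2(x,y)=f_3(x\triangleleft y,\,x^{-1}\triangleleft y)\,f_2(x,y)\,f_3(e_y,y)$, $g_3(a,b)=1$, $g_4(a,b)=f_1(e_a,a^{-1})$, $\psi_1(x,y)=f_3(x\triangleleft y,\,x^{-1}\triangleleft y)\,\phi_1(x,y)$, $\psi_2(a,b)=f_3(ab,\,b^{-1}a^{-1})\,\phi_2(a,b)$. Then the 6-tuple $(g_1,g_2,g_3,g_4;\psi_1,\psi_2)$ also satisfies conditions (0-i)–(4-$\phi$).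
   Context: A multiple conjugation quandle (MCQ) is a set $X=\bigsqcup_{\lambda\in\Lambda}G_\lambda$ that is a disjoint union of groups $G_\lambda$, together with a binary operation $\triangleleft:X\times X\to X$ such that: (i) for all $a,b\in G_\lambda$, $a\triangleleft b=b^{-1}ab$; (ii) for all $x\in X$ and $a,b\in G_\lambda$, $x\triangleleft e_\lambda=x$ and $x\triangleleft(ab)=(x\triangleleft a)\triangleleft b$, where $e_\lambda$ is the identity of $G_\lambda$; (iii) for all $x,y,z\in X$, $(x\triangleleft y)\triangleleft z=(x\triangleleft z)\triangleleft(y\triangleleft z)$; (iv) for all $x\in X$ and $a,b\in G_\lambda$, the elements $a\triangleleft x$ and $b\triangleleft x$ lie in a common group $G_\mu$ and $(ab)\triangleleft x=(a\triangleleft x)(b\triangleleft x)$. For $x\in X$, $G_x$ denotes the group containing $x$, $e_x$ its identity, $x^{-1}$ the inverse of $x$ in $G_x$. $\bigsqcup_{\lambda}(G_\lambda\times G_\lambda)$ is the set of pairs of elements lying in a common group $G_\lambda$. Rings have a multiplicative identity $1\neq0$ and need not be commutative. Conditions (0-i)–(4-$\phi$) on a 6-tuple $(f_1,f_2,f_3,f_4;\phi_1,\phi_2)$: For all $\lambda$ and $a,b,c\in G_\lambda$: (0-i) $f_3(a,b)$, $f_4(a,b)$ invertible; (0-ii) $f_3(ab,c)f_3(a,b)=f_3(a,bc)$; (0-iii) $f_3(ab,c)f_4(a,b)=f_4(a,bc)f_3(b,c)$; (0-iv) $f_4(ab,c)=f_4(a,bc)f_4(b,c)$; (0-$\phi$)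 $f_3(ab,c)\phi_2(a,b)+\phi_2(ab,c)=f_4(a,bc)\phi_2(b,c)+\phi_2(a,bc)$. For all $a,b\in G_\lambda$: (1-i) $f_1(a,b)=f_4(b^{-1},ab)f_3(a,b)$; (1-ii) $f_3(b,b^{-1}ab)+f_4(b,b^{-1}ab)f_2(a,b)=f_4(a,b)$; (1-$\phi$) $f_4(b,b^{-1}ab)\phi_1(a,b)+\phi_2(b,b^{-1}ab)=\phi_2(a,b)$. For all $x\in X$, $a,b\in G_\lambda$: (2-i) $f_1(x,e_\lambda)=1$; (2-ii) $f_1(x,ab)=f_1(x\triangleleft a,b)f_1(x,a)$; (2-iii) $f_2(x,ab)f_3(a,b)=f_1(x\triangleleft a,b)f_2(x,a)$; (2-iv) $f_2(x,ab)f_4(a,b)=f_2(x\triangleleft a,b)$; (2-$\phi$i) $f_2(x,e_\lambda)\phi_2(e_\lambda,e_\lambda)=\phi_1(x,e_\lambda)$; (2-$\phi$ii) $f_2(x,ab)\phi_2(a,b)+\phi_1(x,ab)=f_1(x\triangleleft a,b)\phi_1(x,a)+\phi_1(x\triangleleft a,b)$. For all $x,y,z\in X$: (3-i) $f_1(x\triangleleft y,z)f_1(x,y)=f_1(x\triangleleft z,y\triangleleft z)f_1(x,z)$; (3-ii) $f_1(x\triangleleft y,z)f_2(x,y)=f_2(x\triangleleft z,y\triangleleft z)f_1(y,z)$; (3-iii) $f_2(x\triangleleft y,z)=f_1(x\triangleleft z,y\triangleleft z)f_2(x,z)+f_2(x\triangleleft z,y\triangleleft z)f_2(y,z)$; (3-$\phi$)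 $f_1(x\triangleleft y,z)\phi_1(x,y)+\phi_1(x\triangleleft y,z)=f_1(x\triangleleft z,y\triangleleft z)\phi_1(x,z)+f_2(x\triangleleft z,y\triangleleft z)\phi_1(y,z)+\phi_1(x\triangleleft z,y\triangleleft z)$. For all $a,b\in G_\lambda$, $x\in X$: (4-i) $f_1(ab,x)f_3(a,b)=f_3(a\triangleleft x,b\triangleleft x)f_1(a,x)$; (4-ii) $f_1(ab,x)f_4(a,b)=f_4(a\triangleleft x,b\triangleleft x)f_1(b,x)$; (4-iii) $f_2(ab,x)=f_3(a\triangleleft x,b\triangleleft x)f_2(a,x)+f_4(a\triangleleft x,b\triangleleft x)f_2(b,x)$; (4-$\phi$) $f_1(ab,x)\phi_2(a,b)+\phi_1(ab,x)=f_3(a\triangleleft x,b\triangleleft x)\phi_1(a,x)+f_4(a\triangleleft x,b\triangleleft x)\phi_1(b,x)+\phi_2(a\triangleleft x,b\triangleleft x)$. *)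

theory Defs
  imports Main
begin

text \<open>We take X to be the whole
type 'x.  grp x is the label of the group containing x, so Lambda = range grp.
mul, iv are the group operations (only meaningful within one group), e l is the
identity of G_l, tri is the quandle operation.\<close>

definition mcq :: "('x \<Rightarrow> 'l) \<Rightarrow> ('x \<Rightarrow> 'x \<Rightarrow> 'x) \<Rightarrow> ('x \<Rightarrow> 'x) \<Rightarrow> ('l \<Rightarrow> 'x)
                   \<Rightarrow> ('x \<Rightarrow> 'x \<Rightarrow> 'x) \<Rightarrow> bool" where
  "mcq grp mul iv e tri \<longleftrightarrow>
     \<comment> \<open>each fibre G_l is a group\<close>
     (\<forall>l\<in>range grp. grp (e l) = l) \<and>
     (\<forall>a b. grp a = grp b \<longrightarrow> grp (mul a b) = grp a) \<and>
     (\<forall>a b c. grp a = grp b \<and> grp b = grp c \<longrightarrow> mul (mul a b) c = mul a (mul b c)) \<and>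
     (\<forall>a. mul (e (grp a)) a = a \<and> mul a (e (grp a)) = a) \<and>
     (\<forall>a. grp (iv a) = grp a \<and> mul (iv a) a = e (grp a) \<and> mul a (iv a) = e (grp a)) \<and>
     \<comment> \<open>(i)\<close>
     (\<forall>a b. grp a = grp b \<longrightarrow> tri a b = mul (mul (iv b) a) b) \<and>
     \<comment> \<open>(ii)\<close>
     (\<forall>x. \<forall>l\<in>range grp. tri x (e l) = x) \<and>
     (\<forall>x a b. grp a = grp b \<longrightarrow> tri x (mul a b) = tri (tri x a) b) \<and>
     \<comment> \<open>(iii)\<close>
     (\<forall>x y z. tri (tri x y) z = tri (tri x z) (tri y z)) \<and>
     \<comment> \<open>(iv)\<close>
     (\<forall>x a b. grp a = grp b \<longrightarrow>
        grp (tri a x) = grp (tri b x) \<and> tri (mul a b) x = mul (tri a x) (tri b x))"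

definition left_module :: "('r::ring_1 \<Rightarrow> 'm::ab_group_add \<Rightarrow> 'm) \<Rightarrow> bool" where
  "left_module sc \<longleftrightarrow>
     (\<forall>r u v. sc r (u + v) = sc r u + sc r v) \<and>
     (\<forall>r s u. sc (r + s) u = sc r u + sc s u) \<and>
     (\<forall>r s u. sc (r * s) u = sc r (sc s u)) \<and>
     (\<forall>u. sc 1 u = u)"

definition ring_invertible :: "'r::ring_1 \<Rightarrow> bool" where
  "ring_invertible r \<longleftrightarrow> (\<exists>s. s * r = 1 \<and> r * s = 1)"

text \<open>Conditions (0-i)--(4-phi).  f3, f4, phi2 are total functions but only their
values on pairs in a common group matter.\<close>
definition conds ::
  "('x \<Rightarrow> 'l) \<Rightarrow> ('x \<Rightarrow> 'x \<Rightarrow> 'x) \<Rightarrow> ('x \<Rightarrow> 'x) \<Rightarrow> ('l \<Rightarrow> 'x) \<Rightarrow> ('x \<Rightarrow> 'x \<Rightarrow> 'x)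
   \<Rightarrow> ('r::ring_1 \<Rightarrow> 'm::ab_group_add \<Rightarrow> 'm)
   \<Rightarrow> ('x \<Rightarrow> 'x \<Rightarrow> 'r) \<Rightarrow> ('x \<Rightarrow> 'x \<Rightarrow> 'r) \<Rightarrow> ('x \<Rightarrow> 'x \<Rightarrow> 'r) \<Rightarrow> ('x \<Rightarrow> 'x \<Rightarrow> 'r)
   \<Rightarrow> ('x \<Rightarrow> 'x \<Rightarrow> 'm) \<Rightarrow> ('x \<Rightarrow> 'x \<Rightarrow> 'm) \<Rightarrow> bool" where
  "conds grp mul iv e tri sc f1 f2 f3 f4 \<phi>1 \<phi>2 \<longleftrightarrow>
     \<comment> \<open>(0-i) .. (0-phi)\<close>
     (\<forall>a b. grp a = grp b \<longrightarrow> ring_invertible (f3 a b) \<and> ring_invertible (f4 a b)) \<and>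
     (\<forall>a b c. grp a = grp b \<and> grp b = grp c \<longrightarrow>
        f3 (mul a b) c * f3 a b = f3 a (mul b c) \<and>
        f3 (mul a b) c * f4 a b = f4 a (mul b c) * f3 b c \<and>
        f4 (mul a b) c = f4 a (mul b c) * f4 b c \<and>
        sc (f3 (mul a b) c) (\<phi>2 a b) + \<phi>2 (mul a b) c
          = sc (f4 a (mul b c)) (\<phi>2 b c) + \<phi>2 a (mul b c)) \<and>
     \<comment> \<open>(1-i), (1-ii), (1-phi)\<close>
     (\<forall>a b. grp a = grp b \<longrightarrow>
        f1 a b = f4 (iv b) (mul a b) * f3 a b \<and>
        f3 b (mul (mul (iv b) a) b) + f4 b (mul (mul (iv b) a) b) * f2 a b = f4 a b \<and>
        sc (f4 b (mul (mul (iv b) a) b)) (\<phi>1 a b) + \<phi>2 b (mul (mul (iv b) a) b) = \<phi>2 a b) \<and>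
     \<comment> \<open>(2-i), (2-phi i)\<close>
     (\<forall>x. \<forall>l\<in>range grp. f1 x (e l) = 1 \<and> sc (f2 x (e l)) (\<phi>2 (e l) (e l)) = \<phi>1 x (e l)) \<and>
     \<comment> \<open>(2-ii), (2-iii), (2-iv), (2-phi ii)\<close>
     (\<forall>x a b. grp a = grp b \<longrightarrow>
        f1 x (mul a b) = f1 (tri x a) b * f1 x a \<and>
        f2 x (mul a b) * f3 a b = f1 (tri x a) b * f2 x a \<and>
        f2 x (mul a b) * f4 a b = f2 (tri x a) b \<and>
        sc (f2 x (mul a b)) (\<phi>2 a b) + \<phi>1 x (mul a b)
          = sc (f1 (tri x a) b) (\<phi>1 x a) + \<phi>1 (tri x a) b) \<and>
     \<comment> \<open>(3-i), (3-ii), (3-iii), (3-phi)\<close>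
     (\<forall>x y z.
        f1 (tri x y) z * f1 x y = f1 (tri x z) (tri y z) * f1 x z \<and>
        f1 (tri x y) z * f2 x y = f2 (tri x z) (tri y z) * f1 y z \<and>
        f2 (tri x y) z = f1 (tri x z) (tri y z) * f2 x z + f2 (tri x z) (tri y z) * f2 y z \<and>
        sc (f1 (tri x y) z) (\<phi>1 x y) + \<phi>1 (tri x y) z
          = sc (f1 (tri x z) (tri y z)) (\<phi>1 x z) + sc (f2 (tri x z) (tri y z)) (\<phi>1 y z)
            + \<phi>1 (tri x z) (tri y z)) \<and>
     \<comment> \<open>(4-i), (4-ii), (4-iii), (4-phi)\<close>
     (\<forall>a b x. grp a = grp b \<longrightarrow>
        f1 (mul a b) x * f3 a b = f3 (tri a x) (tri b x) * f1 a x \<and>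
        f1 (mul a b) x * f4 a b = f4 (tri a x) (tri b x) * f1 b x \<and>
        f2 (mul a b) x = f3 (tri a x) (tri b x) * f2 a x + f4 (tri a x) (tri b x) * f2 b x \<and>
        sc (f1 (mul a b) x) (\<phi>2 a b) + \<phi>1 (mul a b) x
          = sc (f3 (tri a x) (tri b x)) (\<phi>1 a x) + sc (f4 (tri a x) (tri b x)) (\<phi>1 b x)
            + \<phi>2 (tri a x) (tri b x))"

end

theory Submission
  imports Defs
begin


lemma inv_swap: fixes r s :: "'r::ring_1" assumes "ring_invertible r" "s * r = 1" shows "r * s = 1"
proof -
  obtain t where t: "t * r = 1" "r * t = 1" using assms(1) unfolding ring_invertible_def by blast
  have "s = s * (r * t)" using t by simp
  also have "\<dots> = t" using assms(2) by (simp add: mult.assoc[symmetric])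
  finally show ?thesis using t by simp
qed

lemma idem_one: fixes r :: "'r::ring_1" assumes "ring_invertible r" "r * r = r" shows "r = 1"
proof -
  obtain t where t: "t * r = 1" "r * t = 1" using assms(1) unfolding ring_invertible_def by blast
  have "r = t * (r * r)" using t by (simp add: mult.assoc[symmetric])
  also have "\<dots> = 1" using assms(2) t by simp
  finally show ?thesis .
qed

lemma inv_mult: fixes r s :: "'r::ring_1" assumes "ring_invertible r" "ring_invertible s"
  shows "ring_invertible (r * s)"
proof -
  obtain t where t: "t * r = 1" "r * t = 1" using assms(1) unfolding ring_invertible_def by blast
  obtain u where u: "u * s = 1" "s * u = 1" using assms(2) unfolding ring_invertible_def by blast
  have "(u * t) * (r * s) = u * (t * r) * s" by (simp add: mult.assoc)
  moreover have "(r * s) * (u * t) = r * (s * u) * t" by (simp add: mult.assoc)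
  ultimately show ?thesis using t u unfolding ring_invertible_def by (metis mult_1_right)
qed

locale L =
  fixes grp :: "'x \<Rightarrow> 'l" and mul :: "'x \<Rightarrow> 'x \<Rightarrow> 'x" and iv :: "'x \<Rightarrow> 'x"
    and e :: "'l \<Rightarrow> 'x" and tri :: "'x \<Rightarrow> 'x \<Rightarrow> 'x"
    and sc :: "'r::ring_1 \<Rightarrow> 'm::ab_group_add \<Rightarrow> 'm"
    and f1 f2 f3 f4 :: "'x \<Rightarrow> 'x \<Rightarrow> 'r" and \<phi>1 \<phi>2 :: "'x \<Rightarrow> 'x \<Rightarrow> 'm"
  assumes M: "mcq grp mul iv e tri"
    and S: "left_module sc"
    and C: "conds grp mul iv e tri sc f1 f2 f3 f4 \<phi>1 \<phi>2"
begin

lemmas M1 = M[unfolded mcq_def, THEN conjunct1]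
lemmas M2 = M[unfolded mcq_def, THEN conjunct2, THEN conjunct1]
lemmas M3 = M[unfolded mcq_def, THEN conjunct2, THEN conjunct2, THEN conjunct1]
lemmas M4 = M[unfolded mcq_def, THEN conjunct2, THEN conjunct2, THEN conjunct2, THEN conjunct1]
lemmas M5 = M[unfolded mcq_def, THEN conjunct2, THEN conjunct2, THEN conjunct2, THEN conjunct2, THEN conjunct1]
lemmas M6 = M[unfolded mcq_def, THEN conjunct2, THEN conjunct2, THEN conjunct2, THEN conjunct2, THEN conjunct2, THEN conjunct1]
lemmas M7 = M[unfolded mcq_def, THEN conjunct2, THEN conjunct2, THEN conjunct2, THEN conjunct2, THEN conjunct2, THEN conjunct2, THEN conjunct1]
lemmas M8 = M[unfolded mcq_def, THEN conjunct2, THEN conjunct2, THEN conjunct2, THEN conjunct2, THEN conjunct2, THEN conjunct2, THEN conjunct2, THEN conjunct1]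
lemmas M9 = M[unfolded mcq_def, THEN conjunct2, THEN conjunct2, THEN conjunct2, THEN conjunct2, THEN conjunct2, THEN conjunct2, THEN conjunct2, THEN conjunct2, THEN conjunct1]
lemmas M10 = M[unfolded mcq_def, THEN conjunct2, THEN conjunct2, THEN conjunct2, THEN conjunct2, THEN conjunct2, THEN conjunct2, THEN conjunct2, THEN conjunct2, THEN conjunct2]

lemma grp_e [simp]: "grp (e (grp x)) = grp x" using M1 by blast
lemma grp_mul [simp]: "grp a = grp b \<Longrightarrow> grp (mul a b) = grp a" using M2 by blast
lemma assoc: "grp a = grp b \<Longrightarrow> grp b = grp c \<Longrightarrow> mul (mul a b) c = mul a (mul b c)"
  using M3 by blast
lemma lid [simp]: "mul (e (grp a)) a = a" using M4 by blast
lemma rid [simp]: "mul a (e (grp a)) = a" using M4 by blast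
lemma grp_iv [simp]: "grp (iv a) = grp a" using M5 by blast
lemma linv [simp]: "mul (iv a) a = e (grp a)" using M5 by blast
lemma rinv [simp]: "mul a (iv a) = e (grp a)" using M5 by blast
lemma tri_in: "grp a = grp b \<Longrightarrow> tri a b = mul (mul (iv b) a) b" using M6 by blast
lemma tri_id [simp]: "tri x (e (grp y)) = x" using M7 by blast
lemma tri_mul: "grp a = grp b \<Longrightarrow> tri x (mul a b) = tri (tri x a) b" using M8 by blast
lemma tri_sd: "tri (tri x y) z = tri (tri x z) (tri y z)" using M9 by blast
lemma tri_grp: "grp a = grp b \<Longrightarrow> grp (tri a x) = grp (tri b x)" using M10 by blast
lemma tri_hom: "grp a = grp b \<Longrightarrow> tri (mul a b) x = mul (tri a x) (tri b x)" using M10 by blast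

lemma lid': "grp a = grp b \<Longrightarrow> mul (e (grp a)) b = b" by (metis lid)
lemma rid': "grp a = grp b \<Longrightarrow> mul b (e (grp a)) = b" by (metis rid)

lemma idem: assumes "mul u u = u" shows "u = e (grp u)"
proof -
  have "u = mul u (mul u (iv u))" by simp
  also have "\<dots> = mul (mul u u) (iv u)" by (simp add: assoc)
  also have "\<dots> = e (grp u)" using assms by simp
  finally show ?thesis .
qed

lemma linv_uniq: assumes "grp v = grp w" "mul v w = e (grp w)" shows "v = iv w"
proof -
  have "v = mul v (mul w (iv w))" using assms(1) by (simp add: rid')
  also have "\<dots> = mul (mul v w) (iv w)" using assms(1) by (simp add: assoc)
  also have "\<dots> = iv w" using assms by (simp add: lid')
  finally show ?thesis .
qed

lemma iv_iv [simp]: "iv (iv a) = a"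
  using linv_uniq[of a "iv a"] by simp

lemma id5: "grp a = grp b \<Longrightarrow> mul (iv a) (mul a b) = b"
  by (simp add: assoc[symmetric] lid')

lemma iv_mul: assumes "grp a = grp b" shows "iv (mul a b) = mul (iv b) (iv a)"
proof -
  have "mul (mul (iv b) (iv a)) (mul a b) = mul (iv b) (mul (iv a) (mul a b))"
    using assms by (simp add: assoc)
  also have "\<dots> = e (grp b)" using assms by (simp add: id5)
  finally have "mul (mul (iv b) (iv a)) (mul a b) = e (grp (mul a b))" using assms by simp
  then show ?thesis using linv_uniq[of "mul (iv b) (iv a)" "mul a b"] assms by simp
qed

lemma ee [simp]: "mul (e (grp x)) (e (grp x)) = e (grp x)" using lid[of "e (grp x)"] by simp

lemma iv_e [simp]: "iv (e (grp x)) = e (grp x)"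
  using linv_uniq[of "e (grp x)" "e (grp x)"] by (simp add: lid')

lemma tri_e_left: "tri (e (grp x)) y = e (grp (tri x y))"
proof -
  let ?u = "tri (e (grp x)) y"
  have "mul ?u ?u = tri (mul (e (grp x)) (e (grp x))) y" using tri_hom[of "e (grp x)" "e (grp x)" y] by simp
  also have "\<dots> = ?u" by simp
  finally have "?u = e (grp ?u)" by (rule idem)
  moreover have "grp ?u = grp (tri x y)" by (rule tri_grp) simp
  ultimately show ?thesis by simp
qed

lemma tri_iv: "tri (iv x) y = iv (tri x y)"
proof -
  have "mul (tri (iv x) y) (tri x y) = tri (mul (iv x) x) y" using tri_hom[of "iv x" x y] by simp
  also have "\<dots> = e (grp (tri x y))" by (simp add: tri_e_left)
  finally show ?thesis using linv_uniq tri_grp[of "iv x" x y] by simp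
qed

lemma id1: "grp A = grp B \<Longrightarrow> mul B (iv (mul A B)) = iv A"
  by (simp add: iv_mul assoc[symmetric] lid')

lemma id4: "grp a = grp b \<Longrightarrow> mul b (mul (mul (iv b) a) b) = mul a b"
  by (simp add: assoc[symmetric] lid')


lemmas C1 = C[unfolded conds_def, THEN conjunct1]
lemmas C2 = C[unfolded conds_def, THEN conjunct2, THEN conjunct1]
lemmas C3 = C[unfolded conds_def, THEN conjunct2, THEN conjunct2, THEN conjunct1]
lemmas C4 = C[unfolded conds_def, THEN conjunct2, THEN conjunct2, THEN conjunct2, THEN conjunct1]
lemmas C5 = C[unfolded conds_def, THEN conjunct2, THEN conjunct2, THEN conjunct2, THEN conjunct2, THEN conjunct1]
lemmas C6 = C[unfolded conds_def, THEN conjunct2, THEN conjunct2, THEN conjunct2, THEN conjunct2, THEN conjunct2, THEN conjunct1]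
lemmas C7 = C[unfolded conds_def, THEN conjunct2, THEN conjunct2, THEN conjunct2, THEN conjunct2, THEN conjunct2, THEN conjunct2]

lemmas S1 = S[unfolded left_module_def, THEN conjunct1]
lemmas S2 = S[unfolded left_module_def, THEN conjunct2, THEN conjunct1]
lemmas S3 = S[unfolded left_module_def, THEN conjunct2, THEN conjunct2, THEN conjunct1]
lemmas S4 = S[unfolded left_module_def, THEN conjunct2, THEN conjunct2, THEN conjunct2]


lemma sc_add: "sc r (u + v) = sc r u + sc r v" using S1 by blast
lemma sc_radd: "sc (r + s) u = sc r u + sc s u" using S2 by blast
lemma sc_mult: "sc (r * s) u = sc r (sc s u)" using S3 by blast
lemma sc_one: "sc 1 u = u" using S4 by blast

lemma c0i3: "grp a = grp b \<Longrightarrow> ring_invertible (f3 a b)" using C1 by blast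
lemma c0i4: "grp a = grp b \<Longrightarrow> ring_invertible (f4 a b)" using C1 by blast
lemma c0ii: "grp a = grp b \<Longrightarrow> grp b = grp c \<Longrightarrow> f3 (mul a b) c * f3 a b = f3 a (mul b c)" using C2 by blast
lemma c0iii: "grp a = grp b \<Longrightarrow> grp b = grp c \<Longrightarrow> f3 (mul a b) c * f4 a b = f4 a (mul b c) * f3 b c" using C2 by blast
lemma c0iv: "grp a = grp b \<Longrightarrow> grp b = grp c \<Longrightarrow> f4 (mul a b) c = f4 a (mul b c) * f4 b c" using C2 by blast
lemma c0phi: "grp a = grp b \<Longrightarrow> grp b = grp c \<Longrightarrow> sc (f3 (mul a b) c) (\<phi>2 a b) + \<phi>2 (mul a b) c
          = sc (f4 a (mul b c)) (\<phi>2 b c) + \<phi>2 a (mul b c)" using C2 by blast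
lemma c1i: "grp a = grp b \<Longrightarrow> f1 a b = f4 (iv b) (mul a b) * f3 a b" using C3 by blast
lemma c1ii: "grp a = grp b \<Longrightarrow> f3 b (mul (mul (iv b) a) b) + f4 b (mul (mul (iv b) a) b) * f2 a b = f4 a b" using C3 by blast
lemma c1phi: "grp a = grp b \<Longrightarrow> sc (f4 b (mul (mul (iv b) a) b)) (\<phi>1 a b) + \<phi>2 b (mul (mul (iv b) a) b) = \<phi>2 a b" using C3 by blast
lemma c2i: "f1 x (e (grp y)) = 1" using C4 by blast
lemma c2phi: "sc (f2 x (e (grp y))) (\<phi>2 (e (grp y)) (e (grp y))) = \<phi>1 x (e (grp y))" using C4 by blast
lemma c2ii: "grp a = grp b \<Longrightarrow> f1 x (mul a b) = f1 (tri x a) b * f1 x a" using C5 by blast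
lemma c2iii: "grp a = grp b \<Longrightarrow> f2 x (mul a b) * f3 a b = f1 (tri x a) b * f2 x a" using C5 by blast
lemma c2iv: "grp a = grp b \<Longrightarrow> f2 x (mul a b) * f4 a b = f2 (tri x a) b" using C5 by blast
lemma c2phii: "grp a = grp b \<Longrightarrow> sc (f2 x (mul a b)) (\<phi>2 a b) + \<phi>1 x (mul a b)
          = sc (f1 (tri x a) b) (\<phi>1 x a) + \<phi>1 (tri x a) b" using C5 by blast
lemma c3i: "f1 (tri x y) z * f1 x y = f1 (tri x z) (tri y z) * f1 x z" using C6 by blast
lemma c3ii: "f1 (tri x y) z * f2 x y = f2 (tri x z) (tri y z) * f1 y z" using C6 by blast
lemma c3iii: "f2 (tri x y) z = f1 (tri x z) (tri y z) * f2 x z + f2 (tri x z) (tri y z) * f2 y z" using C6 by blast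
lemma c3phi: "sc (f1 (tri x y) z) (\<phi>1 x y) + \<phi>1 (tri x y) z
          = sc (f1 (tri x z) (tri y z)) (\<phi>1 x z) + sc (f2 (tri x z) (tri y z)) (\<phi>1 y z)
            + \<phi>1 (tri x z) (tri y z)" using C6 by blast
lemma c4i: "grp a = grp b \<Longrightarrow> f1 (mul a b) x * f3 a b = f3 (tri a x) (tri b x) * f1 a x" using C7 by blast
lemma c4ii: "grp a = grp b \<Longrightarrow> f1 (mul a b) x * f4 a b = f4 (tri a x) (tri b x) * f1 b x" using C7 by blast
lemma c4iii: "grp a = grp b \<Longrightarrow> f2 (mul a b) x = f3 (tri a x) (tri b x) * f2 a x + f4 (tri a x) (tri b x) * f2 b x" using C7 by blast
lemma c4phi: "grp a = grp b \<Longrightarrow> sc (f1 (mul a b) x) (\<phi>2 a b) + \<phi>1 (mul a b) x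
          = sc (f3 (tri a x) (tri b x)) (\<phi>1 a x) + sc (f4 (tri a x) (tri b x)) (\<phi>1 b x)
            + \<phi>2 (tri a x) (tri b x)" using C7 by blast


lemma tri_e_same: "grp x = grp y \<Longrightarrow> tri (e (grp x)) y = e (grp x)"
  by (simp add: tri_in rid')

lemma lidi [simp]: "mul (e (grp a)) (iv a) = iv a" using lid[of "iv a"] by simp
lemma ridi [simp]: "mul (iv a) (e (grp a)) = iv a" using rid[of "iv a"] by simp

lemma f3ee: "f3 (e (grp y)) (e (grp y)) = 1"
  using idem_one[OF c0i3[of "e (grp y)" "e (grp y)"]] c0ii[of "e (grp y)" "e (grp y)" "e (grp y)"] by simp

lemma D4: "f3 y (iv y) * f3 (e (grp y)) y = 1"
proof -
  have "f3 (mul (e (grp y)) y) (iv y) * f3 (e (grp y)) y = f3 (e (grp y)) (mul y (iv y))"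
    by (rule c0ii) simp_all
  then show ?thesis using f3ee by simp
qed

lemma D4': "f3 (e (grp y)) y * f3 y (iv y) = 1"
  by (rule inv_swap[OF c0i3 D4]) simp

lemma D3: assumes h: "grp A = grp B" shows "f3 (mul A B) (iv (mul A B)) * f3 A B = f3 A (iv A)"
proof -
  have "grp B = grp (iv (mul A B))" using h by simp
  from c0ii[OF h this] show ?thesis by (simp only: id1[OF h])
qed

lemma K: assumes h: "grp A = grp B"
  shows "f3 (mul A B) (iv (mul A B)) * f4 A B = f1 (e (grp A)) (iv A) * f3 B (iv B)"
proof -
  have g: "grp B = grp (iv (mul A B))" using h by simp
  have 1: "f3 (mul A B) (iv (mul A B)) * f4 A B = f4 A (iv A) * f3 B (iv (mul A B))"
    using c0iii[OF h g] unfolding id1[OF h] .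
  have g1: "grp B = grp (iv B)" by simp
  have g2: "grp (iv B) = grp (iv A)" using h by simp
  have "f3 (mul B (iv B)) (iv A) * f3 B (iv B) = f3 B (mul (iv B) (iv A))"
    by (rule c0ii[OF g1 g2])
  moreover have "mul B (iv B) = e (grp A)" using h by simp
  ultimately have 2: "f3 B (iv (mul A B)) = f3 (e (grp A)) (iv A) * f3 B (iv B)"
    unfolding iv_mul[OF h] by simp
  have g3: "grp (e (grp A)) = grp (iv A)" by simp
  have 3: "f1 (e (grp A)) (iv A) = f4 A (iv A) * f3 (e (grp A)) (iv A)"
    using c1i[OF g3] by simp
  show ?thesis unfolding 1 2 3 by (simp add: mult.assoc)
qed

lemma K': assumes h: "grp A = grp B"
  shows "f1 (e (grp A)) (iv A) = f3 (mul A B) (iv (mul A B)) * f4 A B * f3 (e (grp B)) B"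
proof -
  have "f3 (mul A B) (iv (mul A B)) * f4 A B * f3 (e (grp B)) B
      = f1 (e (grp A)) (iv A) * (f3 B (iv B) * f3 (e (grp B)) B)"
    unfolding K[OF h] by (simp add: mult.assoc)
  then show ?thesis unfolding D4[of B] by simp
qed

lemma Q: "f1 (e (grp y)) z * f3 y (iv y) = f3 (tri y z) (iv (tri y z)) * f1 y z"
  using c4i[of y "iv y" z] by (simp add: tri_iv)

lemma R: "f1 y z * f3 (e (grp y)) y = f3 (e (grp (tri y z))) (tri y z) * f1 (e (grp y)) z"
  using c4i[of "e (grp y)" y z] by (simp add: tri_e_left)

lemma g4inv: "ring_invertible (f1 (e (grp a)) (iv a))"
  using c1i[of "e (grp a)" "iv a"] inv_mult[OF c0i4[of a "iv a"] c0i3[of "e (grp a)" "iv a"]] by simp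

lemma W: assumes h: "grp a = grp b"
  shows "f3 (e (grp a)) (mul a b) * f1 (e (grp a)) (iv a) = f4 a b * f3 (e (grp a)) b"
proof -
  have "f3 (e (grp a)) (mul a b) * f1 (e (grp a)) (iv a)
     = (f3 (e (grp (mul a b))) (mul a b) * f3 (mul a b) (iv (mul a b))) * f4 a b * f3 (e (grp b)) b"
    using K'[OF h] h by (simp add: mult.assoc)
  also have "\<dots> = f4 a b * f3 (e (grp b)) b" using D4'[of "mul a b"] by simp
  finally show ?thesis using h by simp
qed




lemma N1a: "ring_invertible (1::'r)" unfolding ring_invertible_def by (rule exI[of _ 1]) simp

lemma N2c: assumes h: "grp a = grp b"
  shows "f1 (e (grp (mul a b))) (iv (mul a b)) = f1 (e (grp a)) (iv a) * f1 (e (grp b)) (iv b)"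
proof -
  have g: "grp (iv b) = grp (iv a)" using h by simp
  have 1: "f1 (e (grp b)) (mul (iv b) (iv a)) = f1 (tri (e (grp b)) (iv b)) (iv a) * f1 (e (grp b)) (iv b)"
    by (rule c2ii[OF g])
  have te: "tri (e (grp b)) (iv b) = e (grp b)" by (rule tri_e_same) simp
  have em: "grp (mul a b) = grp b" using h by simp
  have ea: "e (grp a) = e (grp b)" using h by simp
  show ?thesis unfolding em ea iv_mul[OF h] 1 te ..
qed

lemma N2d: assumes h: "grp a = grp b" "grp b = grp c"
  shows "sc 1 (sc (f3 (mul a b) (mul (iv b) (iv a))) (\<phi>2 a b))
       + sc (f3 (mul (mul a b) c) (mul (iv c) (iv (mul a b)))) (\<phi>2 (mul a b) c)
     = sc (f1 (e (grp a)) (iv a)) (sc (f3 (mul b c) (mul (iv c) (iv b))) (\<phi>2 b c))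
       + sc (f3 (mul a (mul b c)) (mul (iv (mul b c)) (iv a))) (\<phi>2 a (mul b c))"
proof -
  have hab: "grp (mul a b) = grp c" using h by simp
  have hbc: "grp a = grp (mul b c)" using h by simp
  have as: "mul (mul a b) c = mul a (mul b c)" using h by (rule assoc)
  define T where "T = f3 (mul (mul a b) c) (iv (mul (mul a b) c))"
  have d3: "T * f3 (mul a b) c = f3 (mul a b) (iv (mul a b))" unfolding T_def by (rule D3[OF hab])
  have e1: "sc (f3 (mul a b) (mul (iv b) (iv a))) (\<phi>2 a b) = sc T (sc (f3 (mul a b) c) (\<phi>2 a b))"
    unfolding sc_mult[symmetric] d3 iv_mul[OF h(1)] by (rule refl)
  have e2: "f3 (mul (mul a b) c) (mul (iv c) (iv (mul a b))) = T"
    unfolding T_def iv_mul[OF hab] by (rule refl)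
  have k: "T * f4 a (mul b c) = f1 (e (grp a)) (iv a) * f3 (mul b c) (iv (mul b c))"
    using K[OF hbc] unfolding T_def as .
  have e3: "sc (f1 (e (grp a)) (iv a)) (sc (f3 (mul b c) (mul (iv c) (iv b))) (\<phi>2 b c))
      = sc T (sc (f4 a (mul b c)) (\<phi>2 b c))"
    unfolding sc_mult[symmetric] k iv_mul[OF h(2)] by (rule refl)
  have e4: "f3 (mul a (mul b c)) (mul (iv (mul b c)) (iv a)) = T"
    unfolding T_def as iv_mul[OF hbc] by (rule refl)
  show ?thesis
    unfolding e1 e2 e3 e4 sc_one sc_add[symmetric] c0phi[OF h] by (rule refl)
qed

lemma N3b: assumes h: "grp a = grp b"
  shows "1 + f1 (e (grp b)) (iv b) * (f3 (tri a b) (tri (iv a) b) * f2 a b * f3 (e (grp b)) b)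
       = f1 (e (grp a)) (iv a)"
proof -
  define a' where "a' = mul (mul (iv b) a) b"
  have ta: "tri a b = a'" unfolding a'_def by (rule tri_in[OF h])
  have tia: "tri (iv a) b = iv a'" unfolding tri_iv ta ..
  have ga: "grp b = grp a'" using h by (simp add: a'_def)
  have ba: "mul b a' = mul a b" unfolding a'_def by (rule id4[OF h])
  define P where "P = f3 (mul a b) (iv (mul a b))"
  have k: "f1 (e (grp b)) (iv b) * f3 a' (iv a') = P * f4 b a'"
    using K[OF ga] unfolding ba P_def by simp
  have c0: "f3 b a' + f4 b a' * f2 a b = f4 a b"
    using c1ii[OF h] unfolding a'_def .
  have c: "f4 b a' * f2 a b = f4 a b - f3 b a'" using c0 by (simp add: algebra_simps)
  have d3: "P * f3 b a' = f3 b (iv b)" using D3[OF ga] unfolding ba P_def .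
  have kk: "f1 (e (grp a)) (iv a) = P * f4 a b * f3 (e (grp b)) b" unfolding P_def by (rule K'[OF h])
  have "f1 (e (grp b)) (iv b) * (f3 (tri a b) (tri (iv a) b) * f2 a b * f3 (e (grp b)) b)
      = (f1 (e (grp b)) (iv b) * f3 a' (iv a')) * f2 a b * f3 (e (grp b)) b"
    unfolding ta tia by (simp add: mult.assoc)
  also have "\<dots> = P * (f4 b a' * f2 a b) * f3 (e (grp b)) b"
    unfolding k by (simp add: mult.assoc)
  also have "\<dots> = P * f4 a b * f3 (e (grp b)) b - (P * f3 b a') * f3 (e (grp b)) b"
    unfolding c by (simp add: algebra_simps)
  also have "\<dots> = f1 (e (grp a)) (iv a) - 1"
    unfolding kk d3 D4 ..
  finally show ?thesis by simp
qed

lemma N3c: assumes h: "grp a = grp b"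
  shows "sc (f1 (e (grp b)) (iv b)) (sc (f3 (tri a b) (tri (iv a) b)) (\<phi>1 a b))
       + sc (f3 (mul b (mul (mul (iv b) a) b)) (mul (iv (mul (mul (iv b) a) b)) (iv b))) (\<phi>2 b (mul (mul (iv b) a) b))
       = sc (f3 (mul a b) (mul (iv b) (iv a))) (\<phi>2 a b)"
proof -
  define a' where "a' = mul (mul (iv b) a) b"
  have ta: "tri a b = a'" unfolding a'_def by (rule tri_in[OF h])
  have tia: "tri (iv a) b = iv a'" unfolding tri_iv ta ..
  have ga: "grp b = grp a'" using h by (simp add: a'_def)
  have ba: "mul b a' = mul a b" unfolding a'_def by (rule id4[OF h])
  define P where "P = f3 (mul a b) (iv (mul a b))"
  have k: "f1 (e (grp b)) (iv b) * f3 a' (iv a') = P * f4 b a'"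
    using K[OF ga] unfolding ba P_def by simp
  have i1: "mul (iv a') (iv b) = iv (mul a b)" using iv_mul[OF ga] unfolding ba by simp
  have i2: "mul (iv b) (iv a) = iv (mul a b)" using iv_mul[OF h] by simp
  have cp: "sc (f4 b a') (\<phi>1 a b) + \<phi>2 b a' = \<phi>2 a b" using c1phi[OF h] unfolding a'_def .
  have l: "sc (f1 (e (grp b)) (iv b)) (sc (f3 a' (iv a')) (\<phi>1 a b)) = sc P (sc (f4 b a') (\<phi>1 a b))"
    unfolding sc_mult[symmetric] k ..
  show ?thesis
    unfolding a'_def[symmetric] ta tia ba i1 i2 l P_def[symmetric] sc_add[symmetric] cp ..
qed

lemma N4a: "f1 (e (grp x)) (e l) = 1" if lr: "l \<in> range grp"
proof -
  obtain y where l: "l = grp y" using lr by blast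
  show ?thesis unfolding l by (rule c2i)
qed

lemma N4b: "sc (f3 (tri x (e l)) (tri (iv x) (e l)) * f2 x (e l) * f3 (e (grp (e l))) (e l))
      (sc (f3 (mul (e l) (e l)) (mul (iv (e l)) (iv (e l)))) (\<phi>2 (e l) (e l)))
    = sc (f3 (tri x (e l)) (tri (iv x) (e l))) (\<phi>1 x (e l))" if lr: "l \<in> range grp"
proof -
  obtain y where l: "l = grp y" using lr by blast
  show ?thesis unfolding l using c2phi[of x y] f3ee[of y]
    by (simp add: sc_mult sc_one)
qed

lemma N5a: assumes h: "grp a = grp b"
  shows "f1 (e (grp x)) (mul a b) = f1 (e (grp (tri x a))) b * f1 (e (grp x)) a"
  using c2ii[OF h, of "e (grp x)"] unfolding tri_e_left .

lemma N5b: assumes h: "grp a = grp b"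
  shows "f3 (tri x (mul a b)) (tri (iv x) (mul a b)) * f2 x (mul a b) * f3 (e (grp (mul a b))) (mul a b) * 1
    = f1 (e (grp (tri x a))) b * (f3 (tri x a) (tri (iv x) a) * f2 x a * f3 (e (grp a)) a)"
proof -
  have g1: "grp (e (grp a)) = grp a" by simp
  have f: "f3 (e (grp a)) (mul a b) = f3 a b * f3 (e (grp a)) a"
    using c0ii[OF g1 h] by simp
  have em: "grp (mul a b) = grp a" by (rule grp_mul[OF h])
  have tm: "tri x (mul a b) = tri (tri x a) b" by (rule tri_mul[OF h])
  have tim: "tri (iv x) (mul a b) = iv (tri (tri x a) b)" unfolding tri_iv tm ..
  have c: "f2 x (mul a b) * f3 a b = f1 (tri x a) b * f2 x a" by (rule c2iii[OF h])
  have q: "f3 (tri (tri x a) b) (iv (tri (tri x a) b)) * f1 (tri x a) b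
      = f1 (e (grp (tri x a))) b * f3 (tri x a) (iv (tri x a))" by (rule Q[symmetric])
  have "f3 (tri x (mul a b)) (tri (iv x) (mul a b)) * f2 x (mul a b) * f3 (e (grp (mul a b))) (mul a b) * 1
     = f3 (tri (tri x a) b) (iv (tri (tri x a) b)) * (f2 x (mul a b) * f3 a b) * f3 (e (grp a)) a"
    unfolding em f tm tim by (simp add: mult.assoc)
  also have "\<dots> = (f3 (tri (tri x a) b) (iv (tri (tri x a) b)) * f1 (tri x a) b) * f2 x a * f3 (e (grp a)) a"
    unfolding c by (simp add: mult.assoc)
  also have "\<dots> = f1 (e (grp (tri x a))) b * (f3 (tri x a) (tri (iv x) a) * f2 x a * f3 (e (grp a)) a)"
    unfolding q tri_iv by (simp add: mult.assoc)
  finally show ?thesis .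
qed

lemma N5c: assumes h: "grp a = grp b"
  shows "f3 (tri x (mul a b)) (tri (iv x) (mul a b)) * f2 x (mul a b) * f3 (e (grp (mul a b))) (mul a b)
      * f1 (e (grp a)) (iv a)
    = f3 (tri (tri x a) b) (tri (iv (tri x a)) b) * f2 (tri x a) b * f3 (e (grp b)) b"
proof -
  have em: "grp (mul a b) = grp a" by (rule grp_mul[OF h])
  have eb: "e (grp b) = e (grp a)" using h by simp
  have tm: "tri x (mul a b) = tri (tri x a) b" by (rule tri_mul[OF h])
  have tim: "tri (iv x) (mul a b) = iv (tri (tri x a) b)" unfolding tri_iv tm ..
  have "f3 (tri x (mul a b)) (tri (iv x) (mul a b)) * f2 x (mul a b) * f3 (e (grp (mul a b))) (mul a b)
      * f1 (e (grp a)) (iv a)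
     = f3 (tri (tri x a) b) (iv (tri (tri x a) b)) * f2 x (mul a b) * (f3 (e (grp a)) (mul a b)
      * f1 (e (grp a)) (iv a))" unfolding em tm tim by (simp add: mult.assoc)
  also have "\<dots> = f3 (tri (tri x a) b) (iv (tri (tri x a) b)) * (f2 x (mul a b) * f4 a b) * f3 (e (grp a)) b"
    unfolding W[OF h] by (simp add: mult.assoc)
  also have "\<dots> = f3 (tri (tri x a) b) (tri (iv (tri x a)) b) * f2 (tri x a) b * f3 (e (grp b)) b"
    unfolding c2iv[OF h] eb tri_iv ..
  finally show ?thesis .
qed

lemma N5d: assumes h: "grp a = grp b"
  shows "sc (f3 (tri x (mul a b)) (tri (iv x) (mul a b)) * f2 x (mul a b) * f3 (e (grp (mul a b))) (mul a b))
         (sc (f3 (mul a b) (mul (iv b) (iv a))) (\<phi>2 a b))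
       + sc (f3 (tri x (mul a b)) (tri (iv x) (mul a b))) (\<phi>1 x (mul a b))
     = sc (f1 (e (grp (tri x a))) b) (sc (f3 (tri x a) (tri (iv x) a)) (\<phi>1 x a))
       + sc (f3 (tri (tri x a) b) (tri (iv (tri x a)) b)) (\<phi>1 (tri x a) b)"
proof -
  have em: "grp (mul a b) = grp a" by (rule grp_mul[OF h])
  have tm: "tri x (mul a b) = tri (tri x a) b" by (rule tri_mul[OF h])
  have tim: "tri (iv x) (mul a b) = iv (tri (tri x a) b)" unfolding tri_iv tm ..
  have i2: "mul (iv b) (iv a) = iv (mul a b)" using iv_mul[OF h] by simp
  have d: "f3 (e (grp a)) (mul a b) * f3 (mul a b) (iv (mul a b)) = 1"
    using D4'[of "mul a b"] unfolding em .
  define Z where "Z = f3 (tri (tri x a) b) (iv (tri (tri x a) b))"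
  have q: "Z * f1 (tri x a) b = f1 (e (grp (tri x a))) b * f3 (tri x a) (iv (tri x a))"
    unfolding Z_def by (rule Q[symmetric])
  have l1: "sc (Z * f2 x (mul a b) * f3 (e (grp a)) (mul a b)) (sc (f3 (mul a b) (iv (mul a b))) (\<phi>2 a b))
      = sc Z (sc (f2 x (mul a b)) (\<phi>2 a b))"
    by (simp only: sc_mult[symmetric] mult.assoc d mult_1_right)
  have "sc Z (sc (f2 x (mul a b)) (\<phi>2 a b)) + sc Z (\<phi>1 x (mul a b))
      = sc Z (sc (f1 (tri x a) b) (\<phi>1 x a) + \<phi>1 (tri x a) b)"
    unfolding sc_add[symmetric] c2phii[OF h] ..
  also have "\<dots> = sc (f1 (e (grp (tri x a))) b) (sc (f3 (tri x a) (iv (tri x a))) (\<phi>1 x a))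
       + sc Z (\<phi>1 (tri x a) b)"
    unfolding sc_add sc_mult[symmetric] mult.assoc[symmetric] q ..
  finally show ?thesis
    unfolding em tm tim i2 l1 Z_def[symmetric] tri_iv Z_def[symmetric] using l1 by (simp add: Z_def)
qed



lemma N6a: "f1 (e (grp (tri x y))) z * f1 (e (grp x)) y = f1 (e (grp (tri x z))) (tri y z) * f1 (e (grp x)) z"
  using c3i[of "e (grp x)" y z] unfolding tri_e_left .

lemma N6b: "f1 (e (grp (tri x y))) z * (f3 (tri x y) (tri (iv x) y) * f2 x y * f3 (e (grp y)) y)
   = f3 (tri (tri x z) (tri y z)) (tri (iv (tri x z)) (tri y z)) * f2 (tri x z) (tri y z)
      * f3 (e (grp (tri y z))) (tri y z) * f1 (e (grp y)) z"
proof -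
  have sd: "tri (tri x y) z = tri (tri x z) (tri y z)" by (rule tri_sd)
  define Wf where "Wf = f3 (tri (tri x z) (tri y z)) (iv (tri (tri x z) (tri y z)))"
  have q: "f1 (e (grp (tri x y))) z * f3 (tri x y) (iv (tri x y)) = Wf * f1 (tri x y) z"
    using Q[of "tri x y" z] unfolding sd Wf_def .
  have "f1 (e (grp (tri x y))) z * (f3 (tri x y) (tri (iv x) y) * f2 x y * f3 (e (grp y)) y)
     = (f1 (e (grp (tri x y))) z * f3 (tri x y) (iv (tri x y))) * f2 x y * f3 (e (grp y)) y"
    unfolding tri_iv by (simp add: mult.assoc)
  also have "\<dots> = Wf * (f1 (tri x y) z * f2 x y) * f3 (e (grp y)) y"
    unfolding q by (simp add: mult.assoc)
  also have "\<dots> = Wf * f2 (tri x z) (tri y z) * (f1 y z * f3 (e (grp y)) y)"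
    unfolding c3ii by (simp add: mult.assoc)
  also have "\<dots> = Wf * f2 (tri x z) (tri y z) * f3 (e (grp (tri y z))) (tri y z) * f1 (e (grp y)) z"
    unfolding R by (simp add: mult.assoc)
  finally show ?thesis unfolding Wf_def tri_iv .
qed

lemma N6c: "f3 (tri (tri x y) z) (tri (iv (tri x y)) z) * f2 (tri x y) z * f3 (e (grp z)) z
   = f1 (e (grp (tri x z))) (tri y z) * (f3 (tri x z) (tri (iv x) z) * f2 x z * f3 (e (grp z)) z)
   + f3 (tri (tri x z) (tri y z)) (tri (iv (tri x z)) (tri y z)) * f2 (tri x z) (tri y z)
      * f3 (e (grp (tri y z))) (tri y z)
     * (f3 (tri y z) (tri (iv y) z) * f2 y z * f3 (e (grp z)) z)"
proof -
  have sd: "tri (tri x y) z = tri (tri x z) (tri y z)" by (rule tri_sd)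
  define p where "p = tri x z"
  define q where "q = tri y z"
  define Wf where "Wf = f3 (tri p q) (iv (tri p q))"
  have qq: "f1 (e (grp p)) q * f3 p (iv p) = Wf * f1 p q"
    unfolding Wf_def by (rule Q)
  have d: "f3 (e (grp q)) q * f3 q (iv q) = 1" by (rule D4')
  have "f1 (e (grp p)) q * (f3 p (iv p) * f2 x z * f3 (e (grp z)) z)
      + Wf * f2 p q * f3 (e (grp q)) q * (f3 q (iv q) * f2 y z * f3 (e (grp z)) z)
      = (f1 (e (grp p)) q * f3 p (iv p)) * f2 x z * f3 (e (grp z)) z
      + Wf * f2 p q * (f3 (e (grp q)) q * f3 q (iv q)) * f2 y z * f3 (e (grp z)) z"
    by (simp add: mult.assoc)
  also have "\<dots> = Wf * (f1 p q * f2 x z + f2 p q * f2 y z) * f3 (e (grp z)) z"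
    unfolding qq d by (simp add: algebra_simps)
  also have "\<dots> = Wf * f2 (tri x y) z * f3 (e (grp z)) z"
    unfolding c3iii[of x y z] p_def q_def ..
  finally show ?thesis unfolding tri_iv Wf_def sd p_def[symmetric] q_def[symmetric] by simp
qed

lemma N6d: "sc (f1 (e (grp (tri x y))) z) (sc (f3 (tri x y) (tri (iv x) y)) (\<phi>1 x y))
      + sc (f3 (tri (tri x y) z) (tri (iv (tri x y)) z)) (\<phi>1 (tri x y) z)
    = sc (f1 (e (grp (tri x z))) (tri y z)) (sc (f3 (tri x z) (tri (iv x) z)) (\<phi>1 x z))
      + sc (f3 (tri (tri x z) (tri y z)) (tri (iv (tri x z)) (tri y z)) * f2 (tri x z) (tri y z)
            * f3 (e (grp (tri y z))) (tri y z)) (sc (f3 (tri y z) (tri (iv y) z)) (\<phi>1 y z))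
      + sc (f3 (tri (tri x z) (tri y z)) (tri (iv (tri x z)) (tri y z))) (\<phi>1 (tri x z) (tri y z))"
proof -
  have sd: "tri (tri x y) z = tri (tri x z) (tri y z)" by (rule tri_sd)
  define p where "p = tri x z"
  define q where "q = tri y z"
  define Wf where "Wf = f3 (tri p q) (iv (tri p q))"
  have qq: "f1 (e (grp p)) q * f3 p (iv p) = Wf * f1 p q"
    unfolding Wf_def by (rule Q)
  have qu: "f1 (e (grp (tri x y))) z * f3 (tri x y) (iv (tri x y)) = Wf * f1 (tri x y) z"
    using Q[of "tri x y" z] unfolding sd Wf_def p_def q_def .
  have d: "f3 (e (grp q)) q * f3 q (iv q) = 1" by (rule D4')
  have l: "sc (f1 (e (grp (tri x y))) z) (sc (f3 (tri x y) (iv (tri x y))) (\<phi>1 x y))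
      + sc Wf (\<phi>1 (tri x y) z) = sc Wf (sc (f1 (tri x y) z) (\<phi>1 x y) + \<phi>1 (tri x y) z)"
    unfolding sc_mult[symmetric] qu sc_add by (simp add: sc_mult)
  have r: "sc (f1 (e (grp p)) q) (sc (f3 p (iv p)) (\<phi>1 x z))
      + sc (Wf * f2 p q * f3 (e (grp q)) q) (sc (f3 q (iv q)) (\<phi>1 y z))
      + sc Wf (\<phi>1 p q)
      = sc Wf (sc (f1 p q) (\<phi>1 x z) + sc (f2 p q) (\<phi>1 y z) + \<phi>1 p q)"
  proof -
    have "sc (Wf * f2 p q * f3 (e (grp q)) q) (sc (f3 q (iv q)) (\<phi>1 y z)) = sc Wf (sc (f2 p q) (\<phi>1 y z))"
      by (simp only: sc_mult[symmetric] mult.assoc d mult_1_right)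
    moreover have "sc (f1 (e (grp p)) q) (sc (f3 p (iv p)) (\<phi>1 x z)) = sc Wf (sc (f1 p q) (\<phi>1 x z))"
      unfolding sc_mult[symmetric] qq ..
    ultimately show ?thesis by (simp add: sc_add)
  qed
  have c: "sc (f1 (tri x y) z) (\<phi>1 x y) + \<phi>1 (tri x y) z
      = sc (f1 p q) (\<phi>1 x z) + sc (f2 p q) (\<phi>1 y z) + \<phi>1 p q"
    unfolding p_def q_def by (rule c3phi)
  have "sc (f1 (e (grp (tri x y))) z) (sc (f3 (tri x y) (iv (tri x y))) (\<phi>1 x y))
      + sc Wf (\<phi>1 (tri x y) z)
     = sc (f1 (e (grp p)) q) (sc (f3 p (iv p)) (\<phi>1 x z))
      + sc (Wf * f2 p q * f3 (e (grp q)) q) (sc (f3 q (iv q)) (\<phi>1 y z))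
      + sc Wf (\<phi>1 p q)" unfolding l r c ..
  then show ?thesis unfolding tri_iv Wf_def sd p_def q_def .
qed

lemma N7b: assumes h: "grp a = grp b"
  shows "f1 (e (grp (mul a b))) x * f1 (e (grp a)) (iv a)
    = f1 (e (grp (tri a x))) (iv (tri a x)) * f1 (e (grp b)) x"
proof -
  have em: "grp (mul a b) = grp a" by (rule grp_mul[OF h])
  have eb: "e (grp b) = e (grp a)" using h by simp
  have gt: "grp (tri a (iv a)) = grp a" by (simp add: tri_in)
  show ?thesis using c3i[of "e (grp a)" "iv a" x] unfolding em eb tri_e_left gt tri_iv .
qed

lemma N7c: assumes h: "grp a = grp b"
  shows "f3 (tri (mul a b) x) (tri (iv (mul a b)) x) * f2 (mul a b) x * f3 (e (grp x)) x
    = 1 * (f3 (tri a x) (tri (iv a) x) * f2 a x * f3 (e (grp x)) x)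
      + f1 (e (grp (tri a x))) (iv (tri a x)) * (f3 (tri b x) (tri (iv b) x) * f2 b x * f3 (e (grp x)) x)"
proof -
  have g: "grp (tri a x) = grp (tri b x)" by (rule tri_grp[OF h])
  have th: "tri (mul a b) x = mul (tri a x) (tri b x)" by (rule tri_hom[OF h])
  define T where "T = f3 (mul (tri a x) (tri b x)) (iv (mul (tri a x) (tri b x)))"
  have d3: "T * f3 (tri a x) (tri b x) = f3 (tri a x) (iv (tri a x))" unfolding T_def by (rule D3[OF g])
  have k: "T * f4 (tri a x) (tri b x) = f1 (e (grp (tri a x))) (iv (tri a x)) * f3 (tri b x) (iv (tri b x))"
    unfolding T_def by (rule K[OF g])
  have "f3 (tri (mul a b) x) (tri (iv (mul a b)) x) * f2 (mul a b) x * f3 (e (grp x)) x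
     = T * (f3 (tri a x) (tri b x) * f2 a x + f4 (tri a x) (tri b x) * f2 b x) * f3 (e (grp x)) x"
    unfolding tri_iv th T_def c4iii[OF h] ..
  also have "\<dots> = (T * f3 (tri a x) (tri b x)) * f2 a x * f3 (e (grp x)) x
     + (T * f4 (tri a x) (tri b x)) * f2 b x * f3 (e (grp x)) x" by (simp add: algebra_simps)
  also have "\<dots> = 1 * (f3 (tri a x) (tri (iv a) x) * f2 a x * f3 (e (grp x)) x)
      + f1 (e (grp (tri a x))) (iv (tri a x)) * (f3 (tri b x) (tri (iv b) x) * f2 b x * f3 (e (grp x)) x)"
    unfolding d3 k tri_iv by (simp add: mult.assoc)
  finally show ?thesis .
qed

lemma N7d: assumes h: "grp a = grp b"
  shows "sc (f1 (e (grp (mul a b))) x) (sc (f3 (mul a b) (mul (iv b) (iv a))) (\<phi>2 a b))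
      + sc (f3 (tri (mul a b) x) (tri (iv (mul a b)) x)) (\<phi>1 (mul a b) x)
    = sc 1 (sc (f3 (tri a x) (tri (iv a) x)) (\<phi>1 a x))
      + sc (f1 (e (grp (tri a x))) (iv (tri a x))) (sc (f3 (tri b x) (tri (iv b) x)) (\<phi>1 b x))
      + sc (f3 (mul (tri a x) (tri b x)) (mul (iv (tri b x)) (iv (tri a x)))) (\<phi>2 (tri a x) (tri b x))"
proof -
  have g: "grp (tri a x) = grp (tri b x)" by (rule tri_grp[OF h])
  have th: "tri (mul a b) x = mul (tri a x) (tri b x)" by (rule tri_hom[OF h])
  have i2: "mul (iv b) (iv a) = iv (mul a b)" using iv_mul[OF h] by simp
  have i3: "mul (iv (tri b x)) (iv (tri a x)) = iv (mul (tri a x) (tri b x))" using iv_mul[OF g] by simp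
  define T where "T = f3 (mul (tri a x) (tri b x)) (iv (mul (tri a x) (tri b x)))"
  have d3: "T * f3 (tri a x) (tri b x) = f3 (tri a x) (iv (tri a x))" unfolding T_def by (rule D3[OF g])
  have k: "T * f4 (tri a x) (tri b x) = f1 (e (grp (tri a x))) (iv (tri a x)) * f3 (tri b x) (iv (tri b x))"
    unfolding T_def by (rule K[OF g])
  have q: "f1 (e (grp (mul a b))) x * f3 (mul a b) (iv (mul a b)) = T * f1 (mul a b) x"
    using Q[of "mul a b" x] unfolding th T_def .
  have "sc (f1 (e (grp (mul a b))) x) (sc (f3 (mul a b) (iv (mul a b))) (\<phi>2 a b))
      + sc T (\<phi>1 (mul a b) x)
     = sc T (sc (f1 (mul a b) x) (\<phi>2 a b) + \<phi>1 (mul a b) x)"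
    unfolding sc_mult[symmetric] q sc_add by (simp add: sc_mult)
  also have "\<dots> = sc T (sc (f3 (tri a x) (tri b x)) (\<phi>1 a x) + sc (f4 (tri a x) (tri b x)) (\<phi>1 b x)
            + \<phi>2 (tri a x) (tri b x))" unfolding c4phi[OF h] ..
  also have "\<dots> = sc 1 (sc (f3 (tri a x) (iv (tri a x))) (\<phi>1 a x))
      + sc (f1 (e (grp (tri a x))) (iv (tri a x))) (sc (f3 (tri b x) (iv (tri b x))) (\<phi>1 b x))
      + sc T (\<phi>2 (tri a x) (tri b x))"
    unfolding sc_add sc_one sc_mult[symmetric] d3 k[symmetric] mult.assoc by simp
  finally show ?thesis unfolding i2 i3 tri_iv th T_def[symmetric] .
qed


theorem new_conds: "conds grp mul iv e tri sc
           (\<lambda>x y. f1 (e (grp x)) y)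
           (\<lambda>x y. f3 (tri x y) (tri (iv x) y) * f2 x y * f3 (e (grp y)) y)
           (\<lambda>a b. 1)
           (\<lambda>a b. f1 (e (grp a)) (iv a))
           (\<lambda>x y. sc (f3 (tri x y) (tri (iv x) y)) (\<phi>1 x y))
           (\<lambda>a b. sc (f3 (mul a b) (mul (iv b) (iv a))) (\<phi>2 a b))"
  apply (unfold conds_def)
  apply (intro conjI allI impI ballI)
                      apply (rule N1a)
                      apply (rule g4inv)
                      apply simp
                      apply simp
                      apply (erule conjE, erule N2c)
                      apply (erule conjE, erule N2d, assumption)
                      apply simp
                      apply (erule N3b)
                      apply (erule N3c)
                      apply (erule N4a)
                      apply (erule N4b)
                      apply (erule N5a)
                      apply (erule N5b)
                      apply (erule N5c)
                      apply (erule N5d)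
                      apply (rule N6a)
                      apply (rule N6b)
                      apply (rule N6c)
                      apply (rule N6d)
                      apply simp
                      apply (erule N7b)
                      apply (erule N7c)
  apply (erule N7d)
  done

end

theorem lemma4p2:
  fixes grp :: "'x \<Rightarrow> 'l" and mul :: "'x \<Rightarrow> 'x \<Rightarrow> 'x" and iv :: "'x \<Rightarrow> 'x"
    and e :: "'l \<Rightarrow> 'x" and tri :: "'x \<Rightarrow> 'x \<Rightarrow> 'x"
    and sc :: "'r::ring_1 \<Rightarrow> 'm::ab_group_add \<Rightarrow> 'm"
    and f1 f2 f3 f4 :: "'x \<Rightarrow> 'x \<Rightarrow> 'r" and \<phi>1 \<phi>2 :: "'x \<Rightarrow> 'x \<Rightarrow> 'm"
  assumes "mcq grp mul iv e tri"
    and "left_module sc"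
    and "conds grp mul iv e tri sc f1 f2 f3 f4 \<phi>1 \<phi>2"
  shows "conds grp mul iv e tri sc
           (\<lambda>x y. f1 (e (grp x)) y)
           (\<lambda>x y. f3 (tri x y) (tri (iv x) y) * f2 x y * f3 (e (grp y)) y)
           (\<lambda>a b. 1)
           (\<lambda>a b. f1 (e (grp a)) (iv a))
           (\<lambda>x y. sc (f3 (tri x y) (tri (iv x) y)) (\<phi>1 x y))
           (\<lambda>a b. sc (f3 (mul a b) (mul (iv b) (iv a))) (\<phi>2 a b))"
proof -
  interpret L grp mul iv e tri sc f1 f2 f3 f4 \<phi>1 \<phi>2 using assms by unfold_locales
  show ?thesis by (rule new_conds)
qed

end
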